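(* For every $\mathcal{L}_{A}^{\Box}$-formula $\varphi$: if $\varphi$ is $\mathsf{LK(A)}$-derivable (i.e. there is a closed $\mathsf{LK(A)}$-tableau for $\varphi$), then $\varphi$ is $\mathsf{K(A)}$-valid.
   Context: $\mathcal{L}_{A}^{\Box}$-formulas are built from a countably infinite set $\mathrm{Var}$ of variables with binary $\wedge,\vee,\&,\to$, constant $\overline{0}$, unary $\Box$. A $\mathsf{K(A)}$-model $\langle W,R,V\rangle$: nonempty $W$, $R\subseteq W\times W$, $V\colon\mathrm{Var}\times W\to[-r,r]$ for some real $r\ge0$, extended by $\wedge=\min$, $\vee=\max$, $\&=+$, $V(\varphi\to\psi,x)=V(\psi,x)-V(\varphi,x)$, $V(\overline{0},x)=0$, $V(\Box\varphi,x)=\inf_{\mathbb{R}}\{V(\varphi,y):Rxy\}$ (empty infimum $=0$). $\varphi$ is $\mathsf{K(A)}$-valid if $V(\varphi,x)\ge0$ for all models and worlds. Tableau calculus $\mathsf{LK(A)}$: a labelled formula is a pair $\varphi^{k}$ of a formula and a natural number. Nodes are either labelled inequations $\Gamma\rhd\Delta$, with $\rhd\in\{>,\ge\}$ and $\Gamma,\Delta$ finite multisets of labelled formulas, or relations $rij$ with $i,j\in\mathbb{N}$. A tableau is a finite tree of nodes grown by the rules below: if the nodes above the line occur on a branch $B$, $B$ may be extended by the nodes below (all on $B$), except for the branching rules, where $B$ splits into two branches each extended by one of the listed alternatives; $\rhd$ is the same in premise and conclusion. Rules: ($\overline{0}\rhd$) from $\Gamma,\overline{0}^{i}\rhd\Delta$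 add $\Gamma\rhd\Delta$; ($\rhd\overline{0}$) from $\Gamma\rhd\overline{0}^{i},\Delta$ add $\Gamma\rhd\Delta$; ($\&\rhd$) from $\Gamma,(\varphi\&\psi)^{i}\rhd\Delta$ add $\Gamma,\varphi^{i},\psi^{i}\rhd\Delta$; ($\rhd\&$) from $\Gamma\rhd(\varphi\&\psi)^{i},\Delta$ add $\Gamma\rhd\varphi^{i},\psi^{i},\Delta$; ($\to\rhd$) from $\Gamma,(\varphi\to\psi)^{i}\rhd\Delta$ add $\Gamma,\psi^{i}\rhd\varphi^{i},\Delta$; ($\rhd\to$) from $\Gamma\rhd(\varphi\to\psi)^{i},\Delta$ add $\Gamma,\varphi^{i}\rhd\psi^{i},\Delta$; ($\wedge\rhd$) from $\Gamma,(\varphi\wedge\psi)^{i}\rhd\Delta$ add both $\Gamma,\varphi^{i}\rhd\Delta$ and $\Gamma,\psi^{i}\rhd\Delta$; ($\rhd\wedge$, branching) from $\Gamma\rhd(\varphi\wedge\psi)^{i},\Delta$ branch into $\Gamma\rhd\varphi^{i},\Delta$ or $\Gamma\rhd\psi^{i},\Delta$; ($\vee\rhd$, branching) from $\Gamma,(\varphi\vee\psi)^{i}\rhd\Delta$ branch into $\Gamma,\varphi^{i}\rhd\Delta$ or $\Gamma,\psi^{i}\rhd\Delta$; ($\rhd\vee$) from $\Gamma\rhd(\varphi\vee\psi)^{i},\Delta$ add both $\Gamma\rhd\varphi^{i},\Delta$ and $\Gamma\rhd\psi^{i},\Delta$; ($\Box\rhd$) from $rij$ and $\Gamma,(\Box\varphi)^{i}\rhd\Delta$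 add $\varphi^{j}\ge(\Box\varphi)^{i}$; ($\rhd\Box$) from $\Gamma\rhd(\Box\varphi)^{i},\Delta$ add $(\Box\varphi)^{i}\ge\varphi^{j}$ and $rij$ for a new label $j$; (ex) from $rik$ add $rkj$ for a new label $j$. The system of inequations associated to a branch consists of the labelled inequations on it containing only labelled formulas of the form $p^{i}$ ($p\in\mathrm{Var}$) or $(\Box\psi)^{i}$, each regarded as a real variable, each inequation read as an inequality between the sums of these variables (empty sum $=0$). A branch is closed if this system has no solution over $\mathbb{R}$; a tableau is closed if all its branches are closed. A tableau for $\varphi$ is one whose root is $[\,]>[\varphi^{1}]$ followed by the node $r12$; $\varphi$ is $\mathsf{LK(A)}$-derivable if there is a closed tableau for $\varphi$. *)

theory Defs
  imports Complex_Main "HOL-Library.Multiset"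
begin

datatype fm =
    Atom nat
  | Conj fm fm
  | Disj fm fm
  | Fus fm fm
  | Imp fm fm
  | Zero
  | Box fm

primrec eval :: "'w set \<Rightarrow> ('w \<times> 'w) set \<Rightarrow> (nat \<Rightarrow> 'w \<Rightarrow> real) \<Rightarrow> fm \<Rightarrow> 'w \<Rightarrow> real" where
  "eval W R V (Atom p) x = V p x"
| "eval W R V (Conj a b) x = min (eval W R V a x) (eval W R V b x)"
| "eval W R V (Disj a b) x = max (eval W R V a x) (eval W R V b x)"
| "eval W R V (Fus a b) x = eval W R V a x + eval W R V b x"
| "eval W R V (Imp a b) x = eval W R V b x - eval W R V a x"
| "eval W R V Zero x = 0"
| "eval W R V (Box a) x =
     (let S = {eval W R V a y | y. y \<in> W \<and> (x, y) \<in> R}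
      in if S = {} then 0 else Inf S)"

definition KA_model :: "'w set \<Rightarrow> ('w \<times> 'w) set \<Rightarrow> (nat \<Rightarrow> 'w \<Rightarrow> real) \<Rightarrow> bool" where
  "KA_model W R V \<longleftrightarrow> W \<noteq> {} \<and> R \<subseteq> W \<times> W \<and>
     (\<exists>r::real. r \<ge> 0 \<and> (\<forall>p. \<forall>x\<in>W. V p x \<in> {-r..r}))"

text \<open>Validity over all models whose worlds are drawn from the type 'w
 (the main theorem quantifies over every type 'w, hence over all models).\<close>
definition KA_valid :: "'w itself \<Rightarrow> fm \<Rightarrow> bool" where
  "KA_valid _ \<phi> \<longleftrightarrow>
     (\<forall>(W::'w set) R V. KA_model W R V \<longrightarrow> (\<forall>x\<in>W. eval W R V \<phi> x \<ge> 0))"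

type_synonym lfm = "fm \<times> nat"

datatype rel = Gt | Ge

datatype node = Ineq "lfm multiset" rel "lfm multiset" | Rnode nat nat

fun node_labels :: "node \<Rightarrow> nat set" where
  "node_labels (Ineq G s D) = snd ` set_mset (G + D)"
| "node_labels (Rnode i j) = {i, j}"

definition branch_labels :: "node list \<Rightarrow> nat set" where
  "branch_labels B = \<Union> (node_labels ` set B)"

text \<open>rule_app B exts: a rule is applicable on branch B (premises occur on B) and
  yields the alternatives exts; a non-branching rule has one alternative (list of
  nodes added to B), a branching rule has two.\<close>
inductive rule_app :: "node list \<Rightarrow> node list list \<Rightarrow> bool" where
  zeroL: "Ineq (add_mset (Zero, i) G) s D \<in> set B \<Longrightarrow> rule_app B [[Ineq G s D]]"
| zeroR: "Ineq G s (add_mset (Zero, i) D) \<in> set B \<Longrightarrow> rule_app B [[Ineq G s D]]"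
| fusL: "Ineq (add_mset (Fus a b, i) G) s D \<in> set B \<Longrightarrow>
           rule_app B [[Ineq (add_mset (a, i) (add_mset (b, i) G)) s D]]"
| fusR: "Ineq G s (add_mset (Fus a b, i) D) \<in> set B \<Longrightarrow>
           rule_app B [[Ineq G s (add_mset (a, i) (add_mset (b, i) D))]]"
| impL: "Ineq (add_mset (Imp a b, i) G) s D \<in> set B \<Longrightarrow>
           rule_app B [[Ineq (add_mset (b, i) G) s (add_mset (a, i) D)]]"
| impR: "Ineq G s (add_mset (Imp a b, i) D) \<in> set B \<Longrightarrow>
           rule_app B [[Ineq (add_mset (a, i) G) s (add_mset (b, i) D)]]"
| conjL: "Ineq (add_mset (Conj a b, i) G) s D \<in> set B \<Longrightarrow>
           rule_app B [[Ineq (add_mset (a, i) G) s D, Ineq (add_mset (b, i) G) s D]]"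
| conjR: "Ineq G s (add_mset (Conj a b, i) D) \<in> set B \<Longrightarrow>
           rule_app B [[Ineq G s (add_mset (a, i) D)], [Ineq G s (add_mset (b, i) D)]]"
| disjL: "Ineq (add_mset (Disj a b, i) G) s D \<in> set B \<Longrightarrow>
           rule_app B [[Ineq (add_mset (a, i) G) s D], [Ineq (add_mset (b, i) G) s D]]"
| disjR: "Ineq G s (add_mset (Disj a b, i) D) \<in> set B \<Longrightarrow>
           rule_app B [[Ineq G s (add_mset (a, i) D), Ineq G s (add_mset (b, i) D)]]"
| boxL: "Rnode i j \<in> set B \<Longrightarrow> Ineq (add_mset (Box a, i) G) s D \<in> set B \<Longrightarrow>
           rule_app B [[Ineq {#(a, j)#} Ge {#(Box a, i)#}]]"
| boxR: "Ineq G s (add_mset (Box a, i) D) \<in> set B \<Longrightarrow> j \<notin> branch_labels B \<Longrightarrow>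
           rule_app B [[Ineq {#(Box a, i)#} Ge {#(a, j)#}, Rnode i j]]"
| ex: "Rnode i k \<in> set B \<Longrightarrow> j \<notin> branch_labels B \<Longrightarrow>
           rule_app B [[Rnode k j]]"

text \<open>A tableau is represented by the list of its branches (root-to-leaf node lists).\<close>
inductive tableau_for :: "fm \<Rightarrow> node list list \<Rightarrow> bool" where
  root: "tableau_for \<phi> [[Ineq {#} Gt {#(\<phi>, 1)#}, Rnode 1 2]]"
| step: "tableau_for \<phi> (Ts1 @ B # Ts2) \<Longrightarrow> rule_app B exts \<Longrightarrow>
           tableau_for \<phi> (Ts1 @ map (\<lambda>e. B @ e) exts @ Ts2)"

fun atomic_fm :: "fm \<Rightarrow> bool" where
  "atomic_fm (Atom p) = True"
| "atomic_fm (Box a) = True"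
| "atomic_fm _ = False"

fun holds_rel :: "rel \<Rightarrow> real \<Rightarrow> real \<Rightarrow> bool" where
  "holds_rel Gt x y = (x > y)"
| "holds_rel Ge x y = (x \<ge> y)"

definition solves :: "(lfm \<Rightarrow> real) \<Rightarrow> node list \<Rightarrow> bool" where
  "solves f B \<longleftrightarrow>
     (\<forall>G s D. Ineq G s D \<in> set B \<longrightarrow> (\<forall>l\<in>#G + D. atomic_fm (fst l)) \<longrightarrow>
        holds_rel s (\<Sum>l\<in>#G. f l) (\<Sum>l\<in>#D. f l))"

definition closed_branch :: "node list \<Rightarrow> bool" where
  "closed_branch B \<longleftrightarrow> \<not> (\<exists>f. solves f B)"

definition LKA_derivable :: "fm \<Rightarrow> bool" where
  "LKA_derivable \<phi> \<longleftrightarrow> (\<exists>T. tableau_for \<phi> T \<and> (\<forall>B\<in>set T. closed_branch B))"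

end

theory Submission imports Defs begin

lemma subseq_conv:
  fixes F :: "nat \<Rightarrow> 'a \<Rightarrow> real"
  assumes "finite X" "\<And>n x. \<bar>F n x\<bar> \<le> b x"
  shows "\<exists>\<sigma> L. strict_mono \<sigma> \<and> (\<forall>x\<in>X. (\<lambda>n. F (\<sigma> n) x) \<longlonglongrightarrow> L x)"
  using assms(1)
proof (induction X rule: finite_induct)
  case empty
  show ?case by (rule exI[of _ id]) (auto simp: strict_mono_def)
next
  case (insert x X)
  then obtain \<sigma> L where s: "strict_mono \<sigma>" "\<forall>y\<in>X. (\<lambda>n. F (\<sigma> n) y) \<longlonglongrightarrow> L y" by blast
  obtain \<tau> where t: "strict_mono \<tau>" "monoseq (\<lambda>n. F (\<sigma> (\<tau> n)) x)"
    using seq_monosub[of "\<lambda>n. F (\<sigma> n) x"] by blast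
  have "Bseq (\<lambda>n. F (\<sigma> (\<tau> n)) x)"
    by (rule BseqI'[of _ "b x"]) (use assms(2) in auto)
  with t have "convergent (\<lambda>n. F (\<sigma> (\<tau> n)) x)" using Bseq_monoseq_convergent by blast
  then obtain l where l: "(\<lambda>n. F (\<sigma> (\<tau> n)) x) \<longlonglongrightarrow> l" by (auto simp: convergent_def)
  have sm: "strict_mono (\<sigma> \<circ> \<tau>)" using s(1) t(1) by (rule strict_mono_o)
  have "\<forall>y\<in>X. (\<lambda>n. F ((\<sigma> \<circ> \<tau>) n) y) \<longlonglongrightarrow> L y"
  proof
    fix y assume "y \<in> X"
    then have "(\<lambda>n. F (\<sigma> n) y) \<longlonglongrightarrow> L y" using s by blast
    from LIMSEQ_subseq_LIMSEQ[OF this t(1)] show "(\<lambda>n. F ((\<sigma> \<circ> \<tau>) n) y) \<longlonglongrightarrow> L y"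
      by (simp add: o_def)
  qed
  then show ?case using sm l
    by (intro exI[of _ "\<sigma> \<circ> \<tau>"] exI[of _ "L(x := l)"]) (auto simp: o_def)
qed

lemma tendsto_sum_mset:
  assumes "\<forall>l\<in>#G. (\<lambda>n. F n l) \<longlonglongrightarrow> L l"
  shows "(\<lambda>n. \<Sum>l\<in>#G. (F n l::real)) \<longlonglongrightarrow> (\<Sum>l\<in>#G. L l)"
  using assms
proof (induction G)
  case empty then show ?case by simp
next
  case (add x G)
  then show ?case by (auto intro!: tendsto_add)
qed

definition approx :: "real \<Rightarrow> real \<Rightarrow> (lfm \<Rightarrow> real) \<Rightarrow> node list \<Rightarrow> bool" where
 "approx d e f B \<longleftrightarrow> (\<forall>G s D. Ineq G s D \<in> set B \<longrightarrow>
     (case s of Gt \<Rightarrow> (\<Sum>l\<in>#G. f l) \<ge> (\<Sum>l\<in>#D. f l) + d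
              | Ge \<Rightarrow> (\<Sum>l\<in>#G. f l) \<ge> (\<Sum>l\<in>#D. f l) - e))"

fun nset :: "node \<Rightarrow> lfm set" where
  "nset (Ineq G s D) = set_mset (G + D)"
| "nset (Rnode i j) = {}"

lemma approx_mono: "approx d e f B \<Longrightarrow> e \<le> e' \<Longrightarrow> approx d e' f B"
  unfolding approx_def by (fastforce split: rel.splits)

lemma limit_sol:
  assumes d: "d > 0" and ap: "\<And>n. approx d (inverse (real (Suc n))) (F n) B"
    and bd: "\<And>n l. \<bar>F n l\<bar> \<le> b l"
  shows "\<exists>f. solves f B"
proof -
  let ?X = "\<Union> (nset ` set B)"
  have fin: "finite ?X"
  proof (intro finite_Union)
    show "finite (nset ` set B)" by simp
    fix M assume "M \<in> nset ` set B"
    then obtain n where "M = nset n" by auto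
    then show "finite M" by (cases n) auto
  qed
  obtain \<sigma> L where s: "strict_mono \<sigma>" "\<forall>x\<in>?X. (\<lambda>n. F (\<sigma> n) x) \<longlonglongrightarrow> L x"
    using subseq_conv[OF fin, of F b] bd by blast
  have e0: "(\<lambda>n. inverse (real (Suc (\<sigma> n)))) \<longlonglongrightarrow> 0"
    using LIMSEQ_subseq_LIMSEQ[OF LIMSEQ_inverse_real_of_nat s(1)] by (simp add: o_def)
  have "solves L B"
    unfolding solves_def
  proof (intro allI impI)
    fix G s' D assume IN: "Ineq G s' D \<in> set B"
    have cG: "(\<lambda>n. \<Sum>l\<in>#G. F (\<sigma> n) l) \<longlonglongrightarrow> (\<Sum>l\<in>#G. L l)"
      by (rule tendsto_sum_mset) (use s(2) IN in force)
    have cD: "(\<lambda>n. \<Sum>l\<in>#D. F (\<sigma> n) l) \<longlonglongrightarrow> (\<Sum>l\<in>#D. L l)"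
      by (rule tendsto_sum_mset) (use s(2) IN in force)
    show "holds_rel s' (\<Sum>l\<in>#G. L l) (\<Sum>l\<in>#D. L l)"
    proof (cases s')
      case Gt
      have "\<forall>n. (\<Sum>l\<in>#D. F (\<sigma> n) l) + d \<le> (\<Sum>l\<in>#G. F (\<sigma> n) l)"
        using ap IN Gt unfolding approx_def by fastforce
      then have "(\<Sum>l\<in>#D. L l) + d \<le> (\<Sum>l\<in>#G. L l)"
        by (intro LIMSEQ_le[OF tendsto_add[OF cD tendsto_const] cG]) auto
      then show ?thesis using Gt d by simp
    next
      case Ge
      have "\<forall>n. (\<Sum>l\<in>#D. F (\<sigma> n) l) - inverse (real (Suc (\<sigma> n))) \<le> (\<Sum>l\<in>#G. F (\<sigma> n) l)"
        using ap IN Ge unfolding approx_def by fastforce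
      then have "(\<Sum>l\<in>#D. L l) - 0 \<le> (\<Sum>l\<in>#G. L l)"
        by (intro LIMSEQ_le[OF tendsto_diff[OF cD e0] cG]) auto
      then show ?thesis using Ge by simp
    qed
  qed
  then show ?thesis by blast
qed


primrec cb :: "fm \<Rightarrow> real" where
  "cb (Atom p) = 1" | "cb (Conj a b) = cb a + cb b" | "cb (Disj a b) = cb a + cb b"
| "cb (Fus a b) = cb a + cb b" | "cb (Imp a b) = cb a + cb b" | "cb Zero = 0" | "cb (Box a) = cb a"

lemma cb_nonneg: "cb a \<ge> 0" by (induction a) auto

declare eval.simps(7)[simp del]

locale cm =
  fixes W :: "'w set" and R V r x0 \<phi>
  assumes RW: "R \<subseteq> W \<times> W" and r0: "r \<ge> 0" and Vb: "\<And>p x. x \<in> W \<Longrightarrow> \<bar>V p x\<bar> \<le> r"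
    and x0: "x0 \<in> W" and neg: "eval W R V \<phi> x0 < 0"
begin

definition succ where "succ w = {y. y \<in> W \<and> (w, y) \<in> R}"

lemma eval_Box: "eval W R V (Box a) w = (if succ w = {} then 0 else Inf ((\<lambda>y. eval W R V a y) ` succ w))"
proof -
  have "{eval W R V a y | y. y \<in> W \<and> (w, y) \<in> R} = (\<lambda>y. eval W R V a y) ` succ w"
    by (auto simp: succ_def)
  then show ?thesis by (simp only: eval.simps Let_def image_is_empty)
qed

lemma eval_bound: "w \<in> W \<Longrightarrow> \<bar>eval W R V a w\<bar> \<le> cb a * r"
proof (induction a arbitrary: w)
  case (Atom p) then show ?case using Vb by simp
next
  case (Conj a b) then show ?case using cb_nonneg[of a] cb_nonneg[of b] r0
    by (smt (verit, best) cb.simps(2) distrib_right eval.simps(2) mult_nonneg_nonneg)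
next
  case (Disj a b) then show ?case using cb_nonneg[of a] cb_nonneg[of b] r0
    by (smt (verit, best) cb.simps(3) distrib_right eval.simps(3) mult_nonneg_nonneg)
next
  case (Fus a b) then show ?case by (simp add: distrib_right abs_triangle_ineq[THEN order_trans] add_mono)
next
  case (Imp a b) then show ?case
    by (smt (verit, best) cb.simps(5) distrib_right eval.simps(5))
next
  case Zero then show ?case by simp
next
  case (Box a)
  show ?case
  proof (cases "succ w = {}")
    case True then show ?thesis using cb_nonneg[of a] r0 by (simp add: eval_Box)
  next
    case False
    let ?S = "(\<lambda>y. eval W R V a y) ` succ w"
    have b: "\<forall>x\<in>?S. \<bar>x\<bar> \<le> cb a * r" using Box by (auto simp: succ_def)
    have bb: "bdd_below ?S" using b by (intro bdd_belowI[of _ "- (cb a * r)"]) force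
    obtain y where y: "y \<in> succ w" using False by blast
    have "Inf ?S \<le> eval W R V a y" using bb y by (intro cInf_lower) auto
    moreover have "eval W R V a y \<le> cb a * r" using b y by force
    moreover have "- (cb a * r) \<le> Inf ?S" using False b by (intro cInf_greatest) force+
    ultimately show ?thesis using False by (simp add: eval_Box)
  qed
qed

definition val :: "fm \<Rightarrow> 'w option \<Rightarrow> real" where
  "val a ow = (case ow of None \<Rightarrow> 0 | Some w \<Rightarrow> eval W R V a w)"

lemma val_simps[simp]:
  "val (Conj a b) ow = min (val a ow) (val b ow)"
  "val (Disj a b) ow = max (val a ow) (val b ow)"
  "val (Fus a b) ow = val a ow + val b ow"
  "val (Imp a b) ow = val b ow - val a ow"
  "val Zero ow = 0"
  "val a None = 0"
  by (cases ow; simp add: val_def)+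

definition relok :: "'w option \<Rightarrow> 'w option \<Rightarrow> bool" where
  "relok ow ow' = (case ow of None \<Rightarrow> ow' = None
     | Some w \<Rightarrow> (case ow' of None \<Rightarrow> succ w = {} | Some v \<Rightarrow> (w, v) \<in> R))"

definition delta where "delta = - eval W R V \<phi> x0"

lemma delta_pos: "delta > 0" using neg by (simp add: delta_def)

definition holdsd :: "real \<Rightarrow> rel \<Rightarrow> real \<Rightarrow> real \<Rightarrow> bool" where
  "holdsd e s x y = (case s of Gt \<Rightarrow> x \<ge> y + delta | Ge \<Rightarrow> x \<ge> y - e)"

definition msum :: "(nat \<Rightarrow> 'w option) \<Rightarrow> lfm multiset \<Rightarrow> real" where
  "msum g G = (\<Sum>l\<in>#G. val (fst l) (g (snd l)))"

lemma msum_add[simp]: "msum g (add_mset l G) = val (fst l) (g (snd l)) + msum g G"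
  "msum g {#} = 0"
  by (simp_all add: msum_def)

fun sat :: "real \<Rightarrow> (nat \<Rightarrow> 'w option) \<Rightarrow> node \<Rightarrow> bool" where
  "sat e g (Ineq G s D) = holdsd e s (msum g G) (msum g D)"
| "sat e g (Rnode i j) = relok (g i) (g j)"

definition Inv where
  "Inv e B g \<longleftrightarrow> (\<forall>n\<in>set B. sat e g n) \<and> (\<forall>i w. g i = Some w \<longrightarrow> w \<in> W)"

lemma holdsd_mono: "holdsd e s x y \<Longrightarrow> x \<le> x' \<Longrightarrow> y' \<le> y \<Longrightarrow> holdsd e s x' y'"
  by (cases s) (auto simp: holdsd_def)

lemma msum_cong: "(\<forall>l\<in>#G. g' (snd l) = g (snd l)) \<Longrightarrow> msum g' G = msum g G"
  unfolding msum_def by (metis (mono_tags, lifting) image_mset_cong)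

lemma sat_frame: "(\<forall>i\<in>node_labels n. g' i = g i) \<Longrightarrow> sat e g' n = sat e g n"
proof (cases n)
  case (Ineq G s D)
  assume a: "\<forall>i\<in>node_labels n. g' i = g i"
  have "msum g' G = msum g G" "msum g' D = msum g D"
    using a Ineq by (auto intro!: msum_cong)
  then show ?thesis using Ineq by simp
qed auto

lemma box_lower: "relok ow ow' \<Longrightarrow> (\<forall>w. ow = Some w \<longrightarrow> w \<in> W) \<Longrightarrow> val (Box a) ow \<le> val a ow'"
proof (cases ow)
  case None
  assume "relok ow ow'" then show ?thesis using None by (simp add: relok_def)
next
  case (Some w)
  assume rk: "relok ow ow'" and wW: "\<forall>w. ow = Some w \<longrightarrow> w \<in> W"
  show ?thesis
  proof (cases ow')
    case None then show ?thesis using rk Some by (simp add: relok_def val_def eval_Box)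
  next
    case (Some v)
    with rk \<open>ow = Some w\<close> have wv: "(w, v) \<in> R" by (simp add: relok_def)
    then have vs: "v \<in> succ w" using RW by (auto simp: succ_def)
    let ?S = "(\<lambda>y. eval W R V a y) ` succ w"
    have "bdd_below ?S"
      proof (intro bdd_belowI[of _ "- (cb a * r)"])
        fix x assume "x \<in> (\<lambda>y. eval W R V a y) ` succ w"
        then obtain y where "y \<in> W" "x = eval W R V a y" by (auto simp: succ_def)
        then show "- (cb a * r) \<le> x" using eval_bound[of y a] by linarith
      qed
    then have "Inf ?S \<le> eval W R V a v" using vs by (intro cInf_lower) auto
    then show ?thesis using Some \<open>ow = Some w\<close> vs by (auto simp: val_def eval_Box)
  qed
qed

definition wit :: "real \<Rightarrow> fm \<Rightarrow> 'w option \<Rightarrow> 'w option" where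
  "wit e a ow = (case ow of None \<Rightarrow> None | Some w \<Rightarrow> if succ w = {} then None
     else Some (SOME v. v \<in> succ w \<and> eval W R V a v < Inf ((\<lambda>y. eval W R V a y) ` succ w) + e))"

lemma wit_props:
  assumes e: "e > 0" and oW: "\<forall>w. ow = Some w \<longrightarrow> w \<in> W"
  shows "relok ow (wit e a ow)" "val a (wit e a ow) \<le> val (Box a) ow + e"
    "\<forall>v. wit e a ow = Some v \<longrightarrow> v \<in> W"
proof -
  have "relok ow (wit e a ow) \<and> val a (wit e a ow) \<le> val (Box a) ow + e \<and>
    (\<forall>v. wit e a ow = Some v \<longrightarrow> v \<in> W)"
  proof (cases ow)
    case None then show ?thesis using e by (simp add: wit_def relok_def)
  next
    case (Some w)
    show ?thesis
    proof (cases "succ w = {}")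
      case True then show ?thesis using Some e by (simp add: wit_def relok_def val_def eval_Box)
    next
      case False
      let ?S = "(\<lambda>y. eval W R V a y) ` succ w"
      have "bdd_below ?S"
        proof (intro bdd_belowI[of _ "- (cb a * r)"])
        fix x assume "x \<in> (\<lambda>y. eval W R V a y) ` succ w"
        then obtain y where "y \<in> W" "x = eval W R V a y" by (auto simp: succ_def)
        then show "- (cb a * r) \<le> x" using eval_bound[of y a] by linarith
      qed
      moreover have "Inf ?S < Inf ?S + e" using e by simp
      ultimately have "\<exists>x\<in>?S. x < Inf ?S + e" using False cInf_less_iff[of ?S] by blast
      then have ex: "\<exists>v. v \<in> succ w \<and> eval W R V a v < Inf ?S + e" by blast
      define v where "v = (SOME v. v \<in> succ w \<and> eval W R V a v < Inf ?S + e)"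
      have v: "v \<in> succ w \<and> eval W R V a v < Inf ?S + e" unfolding v_def by (rule someI_ex[OF ex])
      have wv: "wit e a ow = Some v" using Some False by (simp add: wit_def v_def)
      have vW: "v \<in> W" "(w, v) \<in> R" using v by (auto simp: succ_def)
      show ?thesis using v vW False Some wv by (auto simp: relok_def val_def eval_Box)
    qed
  qed
  then show "relok ow (wit e a ow)" "val a (wit e a ow) \<le> val (Box a) ow + e"
    "\<forall>v. wit e a ow = Some v \<longrightarrow> v \<in> W" by auto
qed

end

context cm begin

lemma Inv_app: "Inv e (B @ X) g \<longleftrightarrow> Inv e B g \<and> (\<forall>n\<in>set X. sat e g n)"
  by (auto simp: Inv_def)

lemma fresh_frame: "j \<notin> branch_labels B \<Longrightarrow> n \<in> set B \<Longrightarrow> sat e (g(j := c)) n = sat e g n"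
  by (rule sat_frame) (auto simp: branch_labels_def)

lemma Inv_fresh: "Inv e B g \<Longrightarrow> j \<notin> branch_labels B \<Longrightarrow> (\<forall>w. c = Some w \<longrightarrow> w \<in> W)
   \<Longrightarrow> Inv e B (g(j := c))"
  unfolding Inv_def using fresh_frame by auto

lemma rule_step:
  assumes I: "Inv e B g" and e: "e > 0" and ra: "rule_app B exts"
  shows "\<exists>X\<in>set exts. \<exists>g'. Inv e (B @ X) g'"
  using ra
proof (cases rule: rule_app.cases)
  case (zeroL i G s D)
  then have "sat e g (Ineq (add_mset (Zero, i) G) s D)" using I by (auto simp: Inv_def)
  then show ?thesis using I zeroL by (auto simp: Inv_app)
next
  case (zeroR G s i D)
  then have "sat e g (Ineq G s (add_mset (Zero, i) D))" using I by (auto simp: Inv_def)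
  then show ?thesis using I zeroR by (auto simp: Inv_app)
next
  case (fusL a b i G s D)
  then have "sat e g (Ineq (add_mset (Fus a b, i) G) s D)" using I by (auto simp: Inv_def)
  then show ?thesis using I fusL by (auto simp: Inv_app add.assoc)
next
  case (fusR G s a b i D)
  then have "sat e g (Ineq G s (add_mset (Fus a b, i) D))" using I by (auto simp: Inv_def)
  then show ?thesis using I fusR by (auto simp: Inv_app add.assoc)
next
  case (impL a b i G s D)
  then have "sat e g (Ineq (add_mset (Imp a b, i) G) s D)" using I by (auto simp: Inv_def)
  then show ?thesis using I impL by (cases s) (auto simp: Inv_app holdsd_def)
next
  case (impR G s a b i D)
  then have "sat e g (Ineq G s (add_mset (Imp a b, i) D))" using I by (auto simp: Inv_def)
  then show ?thesis using I impR by (cases s) (auto simp: Inv_app holdsd_def)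
next
  case (conjL a b i G s D)
  then have h: "sat e g (Ineq (add_mset (Conj a b, i) G) s D)" using I by (auto simp: Inv_def)
  have "sat e g (Ineq (add_mset (a, i) G) s D) \<and> sat e g (Ineq (add_mset (b, i) G) s D)"
    using h by (auto elim!: holdsd_mono)
  then show ?thesis using I conjL by (auto simp: Inv_app)
next
  case (conjR G s a b i D)
  then have h: "sat e g (Ineq G s (add_mset (Conj a b, i) D))" using I by (auto simp: Inv_def)
  show ?thesis
  proof (cases "val a (g i) \<le> val b (g i)")
    case True
    then have "sat e g (Ineq G s (add_mset (a, i) D))" using h by (simp add: min_def)
    then show ?thesis using I conjR by (auto simp: Inv_app)
  next
    case False
    then have "sat e g (Ineq G s (add_mset (b, i) D))" using h by (simp add: min_def)
    then show ?thesis using I conjR by (auto simp: Inv_app)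
  qed
next
  case (disjL a b i G s D)
  then have h: "sat e g (Ineq (add_mset (Disj a b, i) G) s D)" using I by (auto simp: Inv_def)
  show ?thesis
  proof (cases "val a (g i) \<le> val b (g i)")
    case True
    then have "sat e g (Ineq (add_mset (b, i) G) s D)" using h by (simp add: max_def)
    then show ?thesis using I disjL by (auto simp: Inv_app)
  next
    case False
    then have "sat e g (Ineq (add_mset (a, i) G) s D)" using h by (simp add: max_def)
    then show ?thesis using I disjL by (auto simp: Inv_app)
  qed
next
  case (disjR G s a b i D)
  then have h: "sat e g (Ineq G s (add_mset (Disj a b, i) D))" using I by (auto simp: Inv_def)
  have "sat e g (Ineq G s (add_mset (a, i) D)) \<and> sat e g (Ineq G s (add_mset (b, i) D))"
    using h by (auto elim!: holdsd_mono)
  then show ?thesis using I disjR by (auto simp: Inv_app)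
next
  case (boxL i j a G s D)
  then have "relok (g i) (g j)" using I by (force simp: Inv_def)
  then have "val (Box a) (g i) \<le> val a (g j)" using I by (intro box_lower) (auto simp: Inv_def)
  then have "sat e g (Ineq {#(a, j)#} Ge {#(Box a, i)#})" using e by (simp add: holdsd_def)
  then show ?thesis using I boxL by (auto simp: Inv_app)
next
  case (boxR G s a i D j)
  have iB: "i \<in> branch_labels B" using boxR(2) unfolding branch_labels_def by force
  then have ij: "i \<noteq> j" using boxR(3) by auto
  have gi: "\<forall>w. g i = Some w \<longrightarrow> w \<in> W" using I by (auto simp: Inv_def)
  let ?c = "wit e a (g i)"
  note wp = wit_props[OF e gi, of a]
  let ?g = "g(j := ?c)"
  have "Inv e B ?g" using Inv_fresh[OF I boxR(3)] wp(3) by blast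
  moreover have "sat e ?g (Ineq {#(Box a, i)#} Ge {#(a, j)#})"
    using wp(2) ij by (simp add: holdsd_def)
  moreover have "sat e ?g (Rnode i j)" using wp(1) ij by simp
  ultimately show ?thesis using boxR by (auto simp: Inv_app)
next
  case (ex i k j)
  have iB: "k \<in> branch_labels B" using ex(2) unfolding branch_labels_def by force
  then have ij: "k \<noteq> j" using ex(3) by auto
  have gi: "\<forall>w. g k = Some w \<longrightarrow> w \<in> W" using I by (auto simp: Inv_def)
  let ?c = "wit e Zero (g k)"
  note wp = wit_props[OF e gi, of Zero]
  let ?g = "g(j := ?c)"
  have "Inv e B ?g" using Inv_fresh[OF I ex(3)] wp(3) by blast
  moreover have "sat e ?g (Rnode k j)" using wp(1) ij by simp
  ultimately show ?thesis using ex by (auto simp: Inv_app)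
qed

lemma tableau_inv:
  assumes "tableau_for \<psi> T" "\<psi> = \<phi>" "e > 0"
  shows "\<exists>B\<in>set T. \<exists>g. Inv e B g"
  using assms
proof (induction rule: tableau_for.induct)
  case (root \<psi>)
  have x0': "\<forall>w. Some x0 = Some w \<longrightarrow> w \<in> W" using x0 by simp
  note wp = wit_props[OF root(2) x0', of Zero]
  define g where "g = (\<lambda>i::nat. None)(1 := Some x0, 2 := wit e Zero (Some x0))"
  have "Inv e [Ineq {#} Gt {#(\<phi>, 1)#}, Rnode 1 2] g"
    using wp x0 root(1) by (auto simp: Inv_def g_def holdsd_def val_def delta_def)
  then show ?case using root by auto
next
  case (step \<psi> Ts1 B Ts2 exts)
  then obtain B' g where B': "B' \<in> set (Ts1 @ B # Ts2)" "Inv e B' g" by blast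
  show ?case
  proof (cases "B' = B")
    case True
    then obtain X g' where "X \<in> set exts" "Inv e (B @ X) g'"
      using rule_step[of e B g exts] B' True step by blast
    then show ?thesis by auto
  next
    case False
    then show ?thesis using B' by auto
  qed
qed

lemma Inv_approx: "Inv e B g \<Longrightarrow> approx delta e (\<lambda>l. val (fst l) (g (snd l))) B"
  unfolding approx_def Inv_def
  by (fastforce simp: holdsd_def msum_def split: rel.splits)

lemma val_bound: "(\<forall>w. ow = Some w \<longrightarrow> w \<in> W) \<Longrightarrow> \<bar>val a ow\<bar> \<le> cb a * r"
  using eval_bound cb_nonneg[of a] r0 by (cases ow) (auto simp: val_def)

end

theorem proposition3p4:
  fixes \<phi> :: fm
  assumes "LKA_derivable \<phi>"
  shows "KA_valid (TYPE('w)) \<phi>"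
  unfolding KA_valid_def
proof (intro allI impI ballI, rule ccontr)
  fix W :: "'w set" and R V x
  assume M: "KA_model W R V" and xW: "x \<in> W" and ng: "\<not> 0 \<le> eval W R V \<phi> x"
  obtain r where r: "r \<ge> 0" "\<forall>p. \<forall>x\<in>W. V p x \<in> {-r..r}" and RW: "R \<subseteq> W \<times> W"
    using M by (auto simp: KA_model_def)
  interpret cm W R V r x \<phi>
  proof
    fix p y assume "y \<in> W" then show "\<bar>V p y\<bar> \<le> r" using r(2) by (metis abs_le_iff atLeastAtMost_iff minus_le_iff)
  qed (use r RW xW ng in auto)
  obtain T where T: "tableau_for \<phi> T" "\<forall>B\<in>set T. closed_branch B"
    using assms by (auto simp: LKA_derivable_def)
  define b where "b l = cb (fst l) * r" for l :: lfm
  have "\<forall>B\<in>set T. \<exists>n. \<forall>F. (\<forall>l. \<bar>F l\<bar> \<le> b l) \<longrightarrow> \<not> approx delta (inverse (real (Suc n))) F B"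
  proof
    fix B assume B: "B \<in> set T"
    show "\<exists>n. \<forall>F. (\<forall>l. \<bar>F l\<bar> \<le> b l) \<longrightarrow> \<not> approx delta (inverse (real (Suc n))) F B"
    proof (rule ccontr)
      assume "\<not> ?thesis"
      then have "\<forall>n. \<exists>F. (\<forall>l. \<bar>F l\<bar> \<le> b l) \<and> approx delta (inverse (real (Suc n))) F B" by blast
      then obtain F where F: "\<And>n. (\<forall>l. \<bar>F n l\<bar> \<le> b l) \<and> approx delta (inverse (real (Suc n))) (F n) B"
        by metis
      have "\<exists>f. solves f B" using limit_sol[OF delta_pos, of F B b] F by blast
      then show False using T B by (auto simp: closed_branch_def)
    qed
  qed
  then obtain nB where nB: "\<And>B. B \<in> set T \<Longrightarrow> \<forall>F. (\<forall>l. \<bar>F l\<bar> \<le> b l) \<longrightarrow>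
      \<not> approx delta (inverse (real (Suc (nB B)))) F B" by metis
  define N where "N = (\<Sum>B\<in>set T. nB B)"
  define e where "e = inverse (real (Suc N))"
  have e0: "e > 0" by (simp add: e_def)
  obtain B g where Bg: "B \<in> set T" "Inv e B g" using tableau_inv[OF T(1) refl e0] by blast
  have ap: "approx delta e (\<lambda>l. val (fst l) (g (snd l))) B" using Inv_approx[OF Bg(2)] .
  have "nB B \<le> N" unfolding N_def using Bg(1) by (intro member_le_sum) auto
  then have "e \<le> inverse (real (Suc (nB B)))" unfolding e_def
    by (intro le_imp_inverse_le) auto
  with ap have ap2: "approx delta (inverse (real (Suc (nB B)))) (\<lambda>l. val (fst l) (g (snd l))) B"
    by (rule approx_mono)
  have bd: "\<forall>l. \<bar>val (fst l) (g (snd l))\<bar> \<le> b l"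
    using val_bound Bg(2) by (auto simp: Inv_def b_def)
  show False using nB[OF Bg(1), THEN spec[of _ "\<lambda>l. val (fst l) (g (snd l))"]] bd ap2 by blast
qed

end
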